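(* Let $\Delta$ be a finite saturated sample set and $\delta$ a $\Delta$-diagram. For every basic term $t$ and every homomorphism $h$ from the term algebra to $\mathbf{W}$, if $h(x)$ strongly extends $D_x(\delta)$ for each variable $x$ occurring in $t$, then $[\![t]\!]_h$ strongly extends $D_t(\delta)$.
   Context: Time warps: join-preserving maps $f\colon\omega^+\to\omega^+$, $\omega^+=\omega\cup\{\omega\}$, ordered pointwise; $p(m)=\bigvee\{k\in\omega\mid k<m\}$; $\mathbf{W}=\langle W,\wedge,\vee,\circ,{}^\star,\mathrm{id}\rangle$ with pointwise meet/join, composition, identity and $f^\star$ the largest time warp $h$ with $f\circ h\le p$; $\mathrm{last}(f)=\min\{m\in\omega^+\mid f(m)=f(\omega)\}$. Terms use $\wedge,\vee,\cdot,{}',1$ (interpreted as $\wedge,\vee,\circ,{}^\star,\mathrm{id}$); basic terms use only variables, $\cdot,{}',1$; $[\![t]\!]_h$ is the value of $t$ under $h$. Samples (formal expressions): $\alpha::=\kappa\mid t[\alpha]\mid \mathrm{suc}(\alpha)\mid\mathrm{last}(t)$ with $\kappa$ a time variable and $t$ a basic term. The relation $\leadsto$: $t[\alpha]\leadsto\alpha$, $\mathrm{suc}(\alpha)\leadsto\alpha$, $t[\alpha]\leadsto t[\mathrm{last}(t)]$, $(tu)[\alpha]\leadsto t[u[\alpha]]$, $t'[\alpha]\leadsto t[t'[\alpha]]$, $t'[\alpha]\leadsto t[\mathrm{suc}(t'[\alpha])]$; a sample set is saturated if closed under $\leadsto$. $S(n)=n+1$ for $n\in\omega$, $S(\omega)=\omega$.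 For saturated $\Delta$, a $\Delta$-diagram is $\delta\colon\Delta\to\omega^+$ such that, whenever the samples mentioned belong to $\Delta$: (1) $\delta(\alpha)\le\delta(\beta)\Rightarrow\delta(t[\alpha])\le\delta(t[\beta])$; (2) $\delta(\alpha)=0\Rightarrow\delta(t[\alpha])=0$; (3) $\delta(\mathrm{suc}(\alpha))=S(\delta(\alpha))$; (4) for $t[\alpha]\in\Delta$: $\delta(\mathrm{last}(t))\le\delta(\alpha)\iff\delta(t[\mathrm{last}(t)])=\delta(t[\alpha])$; (5) $\delta(\mathrm{last}(t))=\omega\Rightarrow\delta(t[\mathrm{last}(t)])=\omega$; (6) $\delta(1[\alpha])=\delta(\alpha)$; (7) $\delta(\mathrm{last}(1))=\omega$; (8) $\delta((tu)[\alpha])=\delta(t[u[\alpha]])$; (9) $\delta(\mathrm{last}(tu))=\omega\Rightarrow\delta(\mathrm{last}(t))=\delta(\mathrm{last}(u))=\omega$; (10) for $t'[\alpha]\in\Delta$: $0<\delta(\alpha)<\omega\Rightarrow\delta(t[t'[\alpha]])<\delta(\alpha)$; (11) for $t'[\alpha]\in\Delta$: $\delta(t'[\alpha])<\omega\Rightarrow\delta(\alpha)\le\delta(t[\mathrm{suc}(t'[\alpha])])$; (12) $\delta(\mathrm{last}(t'))=\omega\Rightarrow\delta(\mathrm{last}(t))=\omega$. For a basic term $t$, $D_t(\delta)=\{(\delta(\alpha),\delta(t[\alpha]))\mid t[\alpha]\in\Delta\}$. A time warp $f$ extends $D_t(\delta)$ if $f(i)=j$ for all $(i,j)\in D_t(\delta)$,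 and strongly extends it if moreover $D_t(\delta)\neq\emptyset$ and $\delta(\mathrm{last}(t))=\omega$ together imply $\mathrm{last}(f)=\omega$. *)

theory Defs
  imports Main "HOL-Library.Extended_Nat"
begin

text \<open>omega^+ is rendered as enat (infinity = omega).\<close>

type_synonym warp = "enat \<Rightarrow> enat"

definition time_warp :: "warp \<Rightarrow> bool" where
  "time_warp f \<longleftrightarrow> (\<forall>S. f (Sup S) = Sup (f ` S))"

definition pw :: "enat \<Rightarrow> enat" where
  "pw m = Sup {enat k | k. enat k < m}"

definition wstar :: "warp \<Rightarrow> warp" where
  "wstar f = (GREATEST h. time_warp h \<and> f \<circ> h \<le> pw)"

definition wlast :: "warp \<Rightarrow> enat" where
  "wlast f = (LEAST m. f m = f \<infinity>)"

datatype trm = Var nat | Meet trm trm | Join trm trm | Cmp trm trm | Star trm | One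

fun basic :: "trm \<Rightarrow> bool" where
  "basic (Var x) = True"
| "basic (Meet t u) = False"
| "basic (Join t u) = False"
| "basic (Cmp t u) = (basic t \<and> basic u)"
| "basic (Star t) = basic t"
| "basic One = True"

fun vars :: "trm \<Rightarrow> nat set" where
  "vars (Var x) = {x}"
| "vars (Meet t u) = vars t \<union> vars u"
| "vars (Join t u) = vars t \<union> vars u"
| "vars (Cmp t u) = vars t \<union> vars u"
| "vars (Star t) = vars t"
| "vars One = {}"

fun eval :: "(nat \<Rightarrow> warp) \<Rightarrow> trm \<Rightarrow> warp" where
  "eval h (Var x) = h x"
| "eval h (Meet t u) = inf (eval h t) (eval h u)"
| "eval h (Join t u) = sup (eval h t) (eval h u)"
| "eval h (Cmp t u) = eval h t \<circ> eval h u"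
| "eval h (Star t) = wstar (eval h t)"
| "eval h One = id"

datatype sample = TV nat | App trm sample | Sc sample | Lst trm

fun basic_sample :: "sample \<Rightarrow> bool" where
  "basic_sample (TV k) = True"
| "basic_sample (App t a) = (basic t \<and> basic_sample a)"
| "basic_sample (Sc a) = basic_sample a"
| "basic_sample (Lst t) = basic t"

inductive leadsto :: "sample \<Rightarrow> sample \<Rightarrow> bool" where
  "leadsto (App t a) a"
| "leadsto (Sc a) a"
| "leadsto (App t a) (App t (Lst t))"
| "leadsto (App (Cmp t u) a) (App t (App u a))"
| "leadsto (App (Star t) a) (App t (App (Star t) a))"
| "leadsto (App (Star t) a) (App t (Sc (App (Star t) a)))"

definition saturated :: "sample set \<Rightarrow> bool" where
  "saturated D \<longleftrightarrow> (\<forall>a\<in>D. \<forall>b. leadsto a b \<longrightarrow> b \<in> D)"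

text \<open>S(n) = n+1, S(omega) = omega is exactly eSuc.\<close>
definition diagram :: "sample set \<Rightarrow> (sample \<Rightarrow> enat) \<Rightarrow> bool" where
  "diagram D d \<longleftrightarrow>
    (\<forall>t a b. a \<in> D \<and> b \<in> D \<and> App t a \<in> D \<and> App t b \<in> D \<and> d a \<le> d b
        \<longrightarrow> d (App t a) \<le> d (App t b)) \<and>
    (\<forall>t a. a \<in> D \<and> App t a \<in> D \<and> d a = 0 \<longrightarrow> d (App t a) = 0) \<and>
    (\<forall>a. a \<in> D \<and> Sc a \<in> D \<longrightarrow> d (Sc a) = eSuc (d a)) \<and>
    (\<forall>t a. App t a \<in> D \<and> a \<in> D \<and> Lst t \<in> D \<and> App t (Lst t) \<in> D \<longrightarrow>
        (d (Lst t) \<le> d a \<longleftrightarrow> d (App t (Lst t)) = d (App t a))) \<and>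
    (\<forall>t. Lst t \<in> D \<and> App t (Lst t) \<in> D \<and> d (Lst t) = \<infinity> \<longrightarrow> d (App t (Lst t)) = \<infinity>) \<and>
    (\<forall>a. a \<in> D \<and> App One a \<in> D \<longrightarrow> d (App One a) = d a) \<and>
    (Lst One \<in> D \<longrightarrow> d (Lst One) = \<infinity>) \<and>
    (\<forall>t u a. App (Cmp t u) a \<in> D \<and> App t (App u a) \<in> D \<longrightarrow>
        d (App (Cmp t u) a) = d (App t (App u a))) \<and>
    (\<forall>t u. Lst (Cmp t u) \<in> D \<and> Lst t \<in> D \<and> Lst u \<in> D \<and> d (Lst (Cmp t u)) = \<infinity> \<longrightarrow>
        d (Lst t) = \<infinity> \<and> d (Lst u) = \<infinity>) \<and>
    (\<forall>t a. App (Star t) a \<in> D \<and> a \<in> D \<and> App t (App (Star t) a) \<in> D \<and> 0 < d a \<and> d a < \<infinity>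
        \<longrightarrow> d (App t (App (Star t) a)) < d a) \<and>
    (\<forall>t a. App (Star t) a \<in> D \<and> a \<in> D \<and> App t (Sc (App (Star t) a)) \<in> D \<and>
        d (App (Star t) a) < \<infinity> \<longrightarrow> d a \<le> d (App t (Sc (App (Star t) a)))) \<and>
    (\<forall>t. Lst (Star t) \<in> D \<and> Lst t \<in> D \<and> d (Lst (Star t)) = \<infinity> \<longrightarrow> d (Lst t) = \<infinity>)"

definition Dt :: "sample set \<Rightarrow> (sample \<Rightarrow> enat) \<Rightarrow> trm \<Rightarrow> (enat \<times> enat) set" where
  "Dt D d t = {(d a, d (App t a)) | a. App t a \<in> D}"

definition extends :: "warp \<Rightarrow> (enat \<times> enat) set \<Rightarrow> bool" where
  "extends f R \<longleftrightarrow> (\<forall>(i, j) \<in> R. f i = j)"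

definition strongly_extends :: "sample set \<Rightarrow> (sample \<Rightarrow> enat) \<Rightarrow> trm \<Rightarrow> warp \<Rightarrow> bool" where
  "strongly_extends D d t f \<longleftrightarrow> extends f (Dt D d t) \<and>
     (Dt D d t \<noteq> {} \<and> d (Lst t) = \<infinity> \<longrightarrow> wlast f = \<infinity>)"

end

theory Submission
  imports Defs
begin


lemma tw_sup2: "time_warp f \<Longrightarrow> f (sup a b) = sup (f a) (f b)"
  unfolding time_warp_def by (metis Sup_insert ccSup_empty image_empty image_insert sup_bot.right_neutral)

lemma tw_mono: "time_warp f \<Longrightarrow> a \<le> b \<Longrightarrow> f a \<le> f b"
  by (metis sup.absorb_iff2 sup_ge1 tw_sup2)

lemma tw_0: "time_warp f \<Longrightarrow> f 0 = 0"
  unfolding time_warp_def by (metis Sup_empty bot_enat_def image_empty)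

lemma tw_inf: "time_warp f \<Longrightarrow> f \<infinity> = (SUP n. f (enat n))"
proof -
  assume "time_warp f"
  have "Sup (range enat) = (\<infinity>::enat)"
  proof (rule ccontr)
    assume "Sup (range enat) \<noteq> (\<infinity>::enat)"
    then obtain k where k: "Sup (range enat) = enat k" by (cases "Sup (range enat)") auto
    have "enat (Suc k) \<le> Sup (range enat)" by (rule Sup_upper) simp
    then show False using k by simp
  qed
  then show ?thesis using \<open>time_warp f\<close> unfolding time_warp_def by (metis image_image)
qed

lemma infinite_enat_unbounded: "infinite (S::enat set) \<Longrightarrow> \<exists>s\<in>S. enat n \<le> s"
  by (metis finite_enat_bounded nle_le)

lemma tw_intro:
  assumes m: "\<And>a b. a \<le> b \<Longrightarrow> f a \<le> f b" and z: "f 0 = 0"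
    and i: "f \<infinity> = (SUP n. f (enat n))"
  shows "time_warp f"
  unfolding time_warp_def
proof
  fix S :: "enat set"
  show "f (Sup S) = Sup (f ` S)"
  proof (cases "finite S")
    case True
    show ?thesis
    proof (cases "S = {}")
      case True then show ?thesis using z by (simp add: bot_enat_def)
    next
      case False
      then have "Sup S = Max S" "Max S \<in> S" using \<open>finite S\<close> by (auto simp: Sup_enat_def)
      then show ?thesis using m
        by (metis Sup_upper order.antisym SUP_least \<open>finite S\<close> Max_ge image_eqI)
    qed
  next
    case False
    then have "Sup S = \<infinity>" by (auto simp add: Sup_enat_def)
    moreover have "f \<infinity> \<le> Sup (f ` S)"
      unfolding i
    proof (rule SUP_least)
      fix n
      obtain s where "s \<in> S" "enat n \<le> s" using infinite_enat_unbounded[OF False] by blast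
      then show "f (enat n) \<le> Sup (f ` S)" by (meson SUP_upper2 m)
    qed
    moreover have "Sup (f ` S) \<le> f \<infinity>" by (simp add: SUP_least m)
    ultimately show ?thesis by simp
  qed
qed

lemma wlast_inf_iff: "wlast f = \<infinity> \<longleftrightarrow> (\<forall>n. f (enat n) \<noteq> f \<infinity>)"
proof
  assume a: "wlast f = \<infinity>"
  show "\<forall>n. f (enat n) \<noteq> f \<infinity>"
  proof (intro allI notI)
    fix n assume "f (enat n) = f \<infinity>"
    then have "wlast f \<le> enat n" unfolding wlast_def by (rule Least_le)
    with a show False by simp
  qed
next
  assume a: "\<forall>n. f (enat n) \<noteq> f \<infinity>"
  show "wlast f = \<infinity>" unfolding wlast_def
  proof (rule Least_equality)
    fix y assume "f y = f \<infinity>"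
    with a have "y = \<infinity>" by (cases y) auto
    then show "\<infinity> \<le> y" by simp
  qed simp
qed

lemma wlast_inf_D:
  assumes tw: "time_warp f" and w: "wlast f = \<infinity>"
  shows "f \<infinity> = \<infinity>" "f (enat n) < \<infinity>"
proof -
  have ne: "\<forall>n. f (enat n) \<noteq> f \<infinity>" using w wlast_inf_iff by blast
  show 1: "f \<infinity> = \<infinity>"
  proof (rule ccontr)
    assume "f \<infinity> \<noteq> \<infinity>"
    let ?R = "range (\<lambda>n. f (enat n))"
    have "?R \<subseteq> {..f \<infinity>}" using tw_mono[OF tw] by auto
    moreover have "finite {..f \<infinity>}" using \<open>f \<infinity> \<noteq> \<infinity>\<close> by (cases "f \<infinity>") (auto intro: finite_enat_bounded)
    ultimately have "finite ?R" by (rule finite_subset)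
    then have "Sup ?R \<in> ?R" by (simp add: Sup_enat_def)
    then show False using tw_inf[OF tw] ne by auto
  qed
  show "f (enat n) < \<infinity>" using ne[rule_format, of n] 1 by (cases "f (enat n)") auto
qed


lemma pw_0: "pw 0 = 0"
  unfolding pw_def by (simp add: bot_enat_def)

lemma pw_Suc: "pw (enat (Suc k)) = enat k"
proof -
  show ?thesis unfolding pw_def
  proof (rule order.antisym)
    show "Sup {enat j | j. enat j < enat (Suc k)} \<le> enat k" by (rule Sup_least) auto
    show "enat k \<le> Sup {enat j | j. enat j < enat (Suc k)}" by (rule Sup_upper) auto
  qed
qed

lemma pw_inf: "pw \<infinity> = \<infinity>"
  unfolding pw_def
proof (rule ccontr)
  let ?S = "{enat j | j. enat j < \<infinity>}"
  assume "Sup ?S \<noteq> \<infinity>"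
  then obtain k where k: "Sup ?S = enat k" by (cases "Sup ?S") auto
  have "enat (Suc k) \<le> Sup ?S" by (rule Sup_upper) simp
  then show False using k by simp
qed

definition Rw :: "warp \<Rightarrow> nat \<Rightarrow> enat" where
  "Rw f k = Sup {m. f m \<le> enat k}"

definition Hw :: "warp \<Rightarrow> warp" where
  "Hw f n = (case n of enat 0 \<Rightarrow> 0 | enat (Suc k) \<Rightarrow> Rw f k | \<infinity> \<Rightarrow> (SUP j. Rw f j))"

lemma Hw_simps[simp]: "Hw f 0 = 0" "Hw f (enat 0) = 0" "Hw f (enat (Suc k)) = Rw f k"
   "Hw f \<infinity> = (SUP j. Rw f j)"
  by (simp_all add: Hw_def zero_enat_def)

lemma Rw_mono: "k \<le> k' \<Longrightarrow> Rw f k \<le> Rw f k'"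
  unfolding Rw_def by (rule Sup_subset_mono) (auto intro: order.trans)

lemma Rw_le_H_inf: "Rw f k \<le> Hw f \<infinity>"
  by (auto intro: SUP_upper)

lemma Hw_mono: "a \<le> b \<Longrightarrow> Hw f a \<le> Hw f b"
proof (cases a)
  case (enat i)
  assume ab: "a \<le> b"
  show ?thesis
  proof (cases i)
    case 0 then show ?thesis using enat by simp
  next
    case (Suc k)
    show ?thesis
    proof (cases b)
      case (enat j)
      then obtain k' where "j = Suc k'" "k \<le> k'" using ab \<open>a = enat i\<close> Suc by (cases j) auto
      then show ?thesis using enat \<open>a = enat i\<close> Suc by (simp add: Rw_mono)
    next
      case infinity then show ?thesis using \<open>a = enat i\<close> Suc Rw_le_H_inf by simp
    qed
  qed
next
  case infinity
  assume "a \<le> b" then have "b = \<infinity>" using infinity by simp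
  then show ?thesis using infinity by simp
qed

lemma Hw_inf_SUP: "Hw f \<infinity> = (SUP n. Hw f (enat n))"
proof (rule order.antisym)
  show "Hw f \<infinity> \<le> (SUP n. Hw f (enat n))"
    by (simp, rule SUP_least, metis Hw_simps(3) SUP_upper UNIV_I)
  show "(SUP n. Hw f (enat n)) \<le> Hw f \<infinity>"
    by (rule SUP_least) (metis Hw_mono Hw_simps(4) enat_ord_code(3))
qed

lemma Hw_tw: "time_warp (Hw f)"
  by (rule tw_intro) (auto simp: Hw_mono Hw_inf_SUP simp del: Hw_simps(4))

lemma Rw_app: "time_warp f \<Longrightarrow> f (Rw f k) \<le> enat k"
  unfolding Rw_def time_warp_def by (auto intro: SUP_least)

lemma Hw_below: "time_warp f \<Longrightarrow> f (Hw f n) \<le> pw n"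
proof (cases n)
  case (enat i)
  assume tw: "time_warp f"
  then show ?thesis using enat
    by (cases i) (auto simp: Rw_app pw_Suc tw_0 pw_0 zero_enat_def[symmetric])
next
  case infinity then show ?thesis by (simp add: pw_inf)
qed

lemma Hw_greatest:
  assumes tw: "time_warp h" and le: "f \<circ> h \<le> pw"
  shows "h \<le> Hw f"
proof -
  have fin: "h (enat i) \<le> Hw f (enat i)" for i
  proof (cases i)
    case 0 then show ?thesis using tw_0[OF tw] by (simp add: zero_enat_def)
  next
    case (Suc k)
    have "f (h (enat i)) \<le> enat k" using le Suc pw_Suc by (metis comp_apply le_funD)
    then have "h (enat i) \<le> Rw f k" unfolding Rw_def by (intro Sup_upper) simp
    then show ?thesis using Suc by simp
  qed
  show ?thesis
  proof (rule le_funI)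
    fix n show "h n \<le> Hw f n"
    proof (cases n)
      case (enat i) then show ?thesis using fin by simp
    next
      case infinity
      have "h \<infinity> \<le> (SUP n. Hw f (enat n))" unfolding tw_inf[OF tw]
        by (rule SUP_mono) (use fin in blast)
      then show ?thesis using infinity Hw_inf_SUP by simp
    qed
  qed
qed

lemma wstar_eq: "time_warp f \<Longrightarrow> wstar f = Hw f"
  unfolding wstar_def
  by (rule Greatest_equality) (auto simp: Hw_tw Hw_below le_funI Hw_greatest)


lemma tw_comp: "time_warp f \<Longrightarrow> time_warp g \<Longrightarrow> time_warp (f \<circ> g)"
  unfolding time_warp_def by (simp add: image_comp)

lemma tw_id: "time_warp id"
  unfolding time_warp_def by simp

lemma eval_tw: "basic t \<Longrightarrow> \<forall>x. time_warp (h x) \<Longrightarrow> time_warp (eval h t)"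
  by (induction t) (auto simp: tw_comp tw_id wstar_eq Hw_tw)

lemma wlast_comp:
  assumes "time_warp f" "time_warp g" "wlast f = \<infinity>" "wlast g = \<infinity>"
  shows "wlast (f \<circ> g) = \<infinity>"
proof -
  have g: "g \<infinity> = \<infinity>" "\<And>n. g (enat n) < \<infinity>" using wlast_inf_D[OF assms(2,4)] by auto
  have f: "f \<infinity> = \<infinity>" "\<And>n. f (enat n) < \<infinity>" using wlast_inf_D[OF assms(1,3)] by auto
  have "f (g (enat n)) \<noteq> f (g \<infinity>)" for n
  proof -
    obtain m where "g (enat n) = enat m" using g(2)[of n] by (cases "g (enat n)") auto
    then show ?thesis using f g by (metis order.strict_iff_not)
  qed
  then show ?thesis by (simp add: wlast_inf_iff)
qed

lemma Rw_fin:
  assumes tw: "time_warp f" and w: "wlast f = \<infinity>"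
  shows "Rw f k < \<infinity>"
proof -
  have "\<exists>N. enat k < f (enat N)"
  proof (rule ccontr)
    assume "\<not> ?thesis"
    then have "(SUP n. f (enat n)) \<le> enat k" by (auto intro: SUP_least simp: not_less)
    then show False using tw_inf[OF tw] wlast_inf_D(1)[OF tw w] by simp
  qed
  then obtain N where N: "enat k < f (enat N)" by blast
  have "Rw f k \<le> enat N" unfolding Rw_def
  proof (rule Sup_least)
    fix m assume "m \<in> {m. f m \<le> enat k}"
    then have "f m \<le> enat k" by simp
    then show "m \<le> enat N" using N tw_mono[OF tw, of "enat N" m] by (meson le_less_trans linorder_le_cases not_less)
  qed
  then show ?thesis by (rule le_less_trans) simp
qed

lemma Hw_inf_inf:
  assumes tw: "time_warp f" and w: "wlast f = \<infinity>"
  shows "Hw f \<infinity> = \<infinity>"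
proof -
  have "enat j \<le> Hw f \<infinity>" for j
  proof -
    obtain v where v: "f (enat j) = enat v" using wlast_inf_D(2)[OF tw w, of j] by (cases "f (enat j)") auto
    have "enat j \<le> Rw f v" unfolding Rw_def by (rule Sup_upper) (simp add: v)
    then show ?thesis using Rw_le_H_inf order.trans by blast
  qed
  then show ?thesis
  proof -
    assume all: "\<And>j. enat j \<le> Hw f \<infinity>"
    show ?thesis
    proof (rule ccontr)
      assume "Hw f \<infinity> \<noteq> \<infinity>"
      then obtain k where k: "Hw f \<infinity> = enat k" by (cases "Hw f \<infinity>") auto
      show False using all[of "Suc k"] k by simp
    qed
  qed
qed

lemma wlast_Hw:
  assumes tw: "time_warp f" and w: "wlast f = \<infinity>"
  shows "wlast (Hw f) = \<infinity>"
proof -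
  have "Hw f (enat n) \<noteq> \<infinity>" for n
    using Rw_fin[OF tw w] by (cases n) auto
  then show ?thesis using Hw_inf_inf[OF tw w] by (simp add: wlast_inf_iff)
qed

lemma Rw_le:
  assumes tw: "time_warp f" and lt: "enat k < f (eSuc s)"
  shows "Rw f k \<le> s"
  unfolding Rw_def
proof (rule Sup_least)
  fix m assume "m \<in> {m. f m \<le> enat k}"
  then have "f m \<le> enat k" by simp
  show "m \<le> s"
  proof (rule ccontr)
    assume "\<not> m \<le> s"
    then have "eSuc s \<le> m" using ileI1 not_le by blast
    then have "f (eSuc s) \<le> f m" by (rule tw_mono[OF tw])
    then show False using lt \<open>f m \<le> enat k\<close> by simp
  qed
qed


lemma satD: "saturated D \<Longrightarrow> a \<in> D \<Longrightarrow> leadsto a b \<Longrightarrow> b \<in> D"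
  unfolding saturated_def by blast

lemmas lt_intros = leadsto.intros

lemma dg2: assumes dgm: "diagram D d" shows "a \<in> D \<Longrightarrow> App t a \<in> D \<Longrightarrow> d a = 0 \<Longrightarrow> d (App t a) = 0"
  using conjunct1[OF conjunct2[OF iffD1[OF diagram_def, OF dgm]]] by blast
lemma dg3: assumes dgm: "diagram D d" shows "a \<in> D \<Longrightarrow> Sc a \<in> D \<Longrightarrow> d (Sc a) = eSuc (d a)"
  using conjunct1[OF conjunct2[OF conjunct2[OF iffD1[OF diagram_def, OF dgm]]]] by blast
lemma dg4: assumes dgm: "diagram D d" shows "App t a \<in> D \<Longrightarrow> a \<in> D \<Longrightarrow> Lst t \<in> D \<Longrightarrow> App t (Lst t) \<in> D \<Longrightarrow>
    (d (Lst t) \<le> d a \<longleftrightarrow> d (App t (Lst t)) = d (App t a))"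
  using conjunct1[OF conjunct2[OF conjunct2[OF conjunct2[OF iffD1[OF diagram_def, OF dgm]]]]] by blast
lemma dg5: assumes dgm: "diagram D d" shows "Lst t \<in> D \<Longrightarrow> App t (Lst t) \<in> D \<Longrightarrow> d (Lst t) = \<infinity> \<Longrightarrow> d (App t (Lst t)) = \<infinity>"
  using conjunct1[OF conjunct2[OF conjunct2[OF conjunct2[OF conjunct2[OF iffD1[OF diagram_def, OF dgm]]]]]] by blast
lemma dg6: assumes dgm: "diagram D d" shows "a \<in> D \<Longrightarrow> App One a \<in> D \<Longrightarrow> d (App One a) = d a"
  using conjunct1[OF conjunct2[OF conjunct2[OF conjunct2[OF conjunct2[OF conjunct2[OF iffD1[OF diagram_def, OF dgm]]]]]]] by blast
lemma dg8: assumes dgm: "diagram D d" shows "App (Cmp t u) a \<in> D \<Longrightarrow> App t (App u a) \<in> D \<Longrightarrow>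
        d (App (Cmp t u) a) = d (App t (App u a))"
  using conjunct1[OF conjunct2[OF conjunct2[OF conjunct2[OF conjunct2[OF conjunct2[OF conjunct2[OF conjunct2[OF iffD1[OF diagram_def, OF dgm]]]]]]]]] by blast
lemma dg9: assumes dgm: "diagram D d" shows "Lst (Cmp t u) \<in> D \<Longrightarrow> Lst t \<in> D \<Longrightarrow> Lst u \<in> D \<Longrightarrow> d (Lst (Cmp t u)) = \<infinity> \<Longrightarrow>
        d (Lst t) = \<infinity> \<and> d (Lst u) = \<infinity>"
  using conjunct1[OF conjunct2[OF conjunct2[OF conjunct2[OF conjunct2[OF conjunct2[OF conjunct2[OF conjunct2[OF conjunct2[OF iffD1[OF diagram_def, OF dgm]]]]]]]]]] by blast
lemma dg10: assumes dgm: "diagram D d" shows "App (Star t) a \<in> D \<Longrightarrow> a \<in> D \<Longrightarrow> App t (App (Star t) a) \<in> D \<Longrightarrow> 0 < d a \<Longrightarrow> d a < \<infinity>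
        \<Longrightarrow> d (App t (App (Star t) a)) < d a"
  using conjunct1[OF conjunct2[OF conjunct2[OF conjunct2[OF conjunct2[OF conjunct2[OF conjunct2[OF conjunct2[OF conjunct2[OF conjunct2[OF iffD1[OF diagram_def, OF dgm]]]]]]]]]]] by blast
lemma dg11: assumes dgm: "diagram D d" shows "App (Star t) a \<in> D \<Longrightarrow> a \<in> D \<Longrightarrow> App t (Sc (App (Star t) a)) \<in> D \<Longrightarrow>
        d (App (Star t) a) < \<infinity> \<Longrightarrow> d a \<le> d (App t (Sc (App (Star t) a)))"
  using conjunct1[OF conjunct2[OF conjunct2[OF conjunct2[OF conjunct2[OF conjunct2[OF conjunct2[OF conjunct2[OF conjunct2[OF conjunct2[OF conjunct2[OF iffD1[OF diagram_def, OF dgm]]]]]]]]]]]] by blast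
lemma dg12: assumes dgm: "diagram D d" shows "Lst (Star t) \<in> D \<Longrightarrow> Lst t \<in> D \<Longrightarrow> d (Lst (Star t)) = \<infinity> \<Longrightarrow> d (Lst t) = \<infinity>"
  using conjunct2[OF conjunct2[OF conjunct2[OF conjunct2[OF conjunct2[OF conjunct2[OF conjunct2[OF conjunct2[OF conjunct2[OF conjunct2[OF conjunct2[OF iffD1[OF diagram_def, OF dgm]]]]]]]]]]]] by blast

lemma se_app: assumes "strongly_extends D d t f" "App t a \<in> D" shows "f (d a) = d (App t a)"
proof -
  have mem: "(d a, d (App t a)) \<in> Dt D d t" using assms(2) unfolding Dt_def by blast
  have "\<forall>(i,j)\<in>Dt D d t. f i = j" using assms(1) unfolding strongly_extends_def extends_def by (rule conjunct1)
  from bspec[OF this mem] show ?thesis by simp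
qed

lemma se_last: "strongly_extends D d t f \<Longrightarrow> App t a \<in> D \<Longrightarrow> d (Lst t) = \<infinity> \<Longrightarrow> wlast f = \<infinity>"
  unfolding strongly_extends_def Dt_def by blast

lemma se_intro:
  assumes "\<And>a. App t a \<in> D \<Longrightarrow> f (d a) = d (App t a)"
    and "\<And>a. App t a \<in> D \<Longrightarrow> d (Lst t) = \<infinity> \<Longrightarrow> wlast f = \<infinity>"
  shows "strongly_extends D d t f"
  using assms unfolding strongly_extends_def extends_def Dt_def by blast

context
  fixes D d t f
  assumes sat: "saturated D" and dg: "diagram D d" and tw: "time_warp f"
    and se: "strongly_extends D d t f"
begin

lemma star_samples:
  assumes "App (Star t) b \<in> D"
  shows "b \<in> D" "App t (App (Star t) b) \<in> D" "Sc (App (Star t) b) \<in> D"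
    "App t (Sc (App (Star t) b)) \<in> D" "Lst t \<in> D" "Lst (Star t) \<in> D"
    "App (Star t) (Lst (Star t)) \<in> D"
proof -
  show 1: "b \<in> D" "App t (App (Star t) b) \<in> D" "App t (Sc (App (Star t) b)) \<in> D"
    "App (Star t) (Lst (Star t)) \<in> D"
    using assms by (auto intro: satD[OF sat] lt_intros)
  then show "Sc (App (Star t) b) \<in> D" "Lst t \<in> D" "Lst (Star t) \<in> D"
    by (meson lt_intros satD[OF sat])+
qed

lemma star_upper:
  assumes A: "App (Star t) b \<in> D" and s: "d (App (Star t) b) < \<infinity>"
  shows "enat k < d b \<Longrightarrow> Rw f k \<le> d (App (Star t) b)"
proof -
  assume k: "enat k < d b"
  note S = star_samples[OF A]
  have "d b \<le> d (App t (Sc (App (Star t) b)))" by (rule dg11[OF dg A S(1) S(4) s])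
  also have "\<dots> = f (eSuc (d (App (Star t) b)))"
    using se_app[OF se S(4)] dg3[OF dg A S(3)] by simp
  finally show ?thesis using k by (intro Rw_le[OF tw]) simp
qed

lemma star_fin:
  assumes A: "App (Star t) b \<in> D" and db: "d b = enat (Suc k)"
  shows "Rw f k = d (App (Star t) b)"
proof (rule order.antisym)
  note S = star_samples[OF A]
  have "f (d (App (Star t) b)) = d (App t (App (Star t) b))" by (rule se_app[OF se S(2)])
  also have "\<dots> < d b" by (rule dg10[OF dg A S(1) S(2)]) (use db in \<open>auto simp: zero_enat_def\<close>)
  finally have "f (d (App (Star t) b)) \<le> enat k" using db by (cases "f (d (App (Star t) b))") auto
  then show "d (App (Star t) b) \<le> Rw f k" unfolding Rw_def by (intro Sup_upper) simp
  show "Rw f k \<le> d (App (Star t) b)"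
  proof (cases "d (App (Star t) b) < \<infinity>")
    case True then show ?thesis using star_upper[OF A True] db by simp
  qed (simp add: top.not_eq_extremum[where 'a=enat, unfolded top_enat_def])
qed

lemma star_ext:
  assumes A: "App (Star t) a \<in> D"
  shows "Hw f (d a) = d (App (Star t) a)"
proof (cases "d a")
  case (enat i)
  show ?thesis
  proof (cases i)
    case 0
    then show ?thesis using dg2[OF dg star_samples(1)[OF A] A] enat by (simp add: zero_enat_def)
  next
    case (Suc k) then show ?thesis using enat star_fin[OF A] by simp
  qed
next
  case infinity
  note S = star_samples[OF A]
  let ?s = "d (App (Star t) a)"
  let ?L = "d (Lst (Star t))"
  have eqs: "d (App (Star t) (Lst (Star t))) = ?s"
    using dg4[OF dg A S(1) S(6) S(7)] infinity by simp
  have up: "Hw f \<infinity> \<le> ?s" if "?s < \<infinity>"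
  proof -
    have "Rw f j \<le> ?s" for j using star_upper[OF A that, of j] infinity by simp
    then show ?thesis by (simp add: SUP_least)
  qed
  have low: "?s \<le> Hw f \<infinity>"
  proof (cases ?L)
    case (enat l)
    show ?thesis
    proof (cases l)
      case 0
      then have "?s = 0" using dg2[OF dg S(6) S(7)] enat eqs by (simp add: zero_enat_def)
      then show ?thesis by simp
    next
      case (Suc k)
      then have "Rw f k = ?s" using star_fin[OF S(7)] enat eqs by simp
      then show ?thesis using Rw_le_H_inf by metis
    qed
  next
    case infinity
    have "d (Lst t) = \<infinity>" by (rule dg12[OF dg S(6) S(5) infinity])
    then have "wlast f = \<infinity>" by (rule se_last[OF se S(2)])
    then show ?thesis using Hw_inf_inf[OF tw] by simp
  qed
  show ?thesis
  proof (cases "?s < \<infinity>")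
    case True then show ?thesis using up low infinity by simp
  next
    case False
    then have "?s = \<infinity>" by (simp add: top.not_eq_extremum[where 'a=enat, unfolded top_enat_def])
    then show ?thesis using low infinity by simp
  qed
qed

lemma star_se: "strongly_extends D d (Star t) (Hw f)"
proof (rule se_intro)
  fix a assume "App (Star t) a \<in> D"
  then show "Hw f (d a) = d (App (Star t) a)" by (rule star_ext)
next
  fix a assume A: "App (Star t) a \<in> D" and L: "d (Lst (Star t)) = \<infinity>"
  note S = star_samples[OF A]
  have "d (Lst t) = \<infinity>" by (rule dg12[OF dg S(6) S(5) L])
  then have "wlast f = \<infinity>" by (rule se_last[OF se S(2)])
  then show "wlast (Hw f) = \<infinity>" by (rule wlast_Hw[OF tw])
qed

end

lemma main:
  assumes sat: "saturated D" and dg: "diagram D d" and tws: "\<forall>x. time_warp (h x)"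
  shows "basic t \<Longrightarrow> \<forall>x\<in>vars t. strongly_extends D d (Var x) (h x) \<Longrightarrow> strongly_extends D d t (eval h t)"
proof (induction t)
  case (Var x) then show ?case by simp
next
  case (Meet t1 t2) then show ?case by simp
next
  case (Join t1 t2) then show ?case by simp
next
  case (Star t)
  then have se: "strongly_extends D d t (eval h t)" by simp
  have tw: "time_warp (eval h t)" using Star.prems eval_tw tws by simp
  show ?case using star_se[OF sat dg tw se] wstar_eq[OF tw] by simp
next
  case One
  show ?case
  proof (rule se_intro)
    fix a assume "App One a \<in> D"
    moreover then have "a \<in> D" by (meson lt_intros satD[OF sat])
    ultimately show "eval h One (d a) = d (App One a)" using dg6[OF dg] by simp
  next
    show "wlast (eval h One) = \<infinity>" by (simp add: wlast_inf_iff)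
  qed
next
  case (Cmp t u)
  then have se1: "strongly_extends D d t (eval h t)" and se2: "strongly_extends D d u (eval h u)" by auto
  have tw1: "time_warp (eval h t)" and tw2: "time_warp (eval h u)" using Cmp.prems eval_tw tws by auto
  show ?case
  proof (rule se_intro)
    fix a assume A: "App (Cmp t u) a \<in> D"
    then have B: "App t (App u a) \<in> D" by (meson lt_intros satD[OF sat])
    then have C: "App u a \<in> D" by (meson lt_intros satD[OF sat])
    show "eval h (Cmp t u) (d a) = d (App (Cmp t u) a)"
      using se_app[OF se2 C] se_app[OF se1 B] dg8[OF dg A B] by simp
  next
    fix a assume A: "App (Cmp t u) a \<in> D" and L: "d (Lst (Cmp t u)) = \<infinity>"
    then have B: "App t (App u a) \<in> D" by (meson lt_intros satD[OF sat])
    then have C: "App u a \<in> D" by (meson lt_intros satD[OF sat])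
    have L1: "Lst (Cmp t u) \<in> D" using A by (meson lt_intros satD[OF sat])
    have L2: "Lst t \<in> D" using B by (meson lt_intros satD[OF sat])
    have L3: "Lst u \<in> D" using C by (meson lt_intros satD[OF sat])
    have "d (Lst t) = \<infinity>" "d (Lst u) = \<infinity>" using dg9[OF dg L1 L2 L3 L] by auto
    then have "wlast (eval h t) = \<infinity>" "wlast (eval h u) = \<infinity>"
      using se_last[OF se1 B] se_last[OF se2 C] by auto
    then show "wlast (eval h (Cmp t u)) = \<infinity>" using wlast_comp[OF tw1 tw2] by simp
  qed
qed


theorem lemma3p8:
  fixes D :: "sample set" and d :: "sample \<Rightarrow> enat" and t :: trm and h :: "nat \<Rightarrow> warp"
  assumes "finite D" and "\<forall>a\<in>D. basic_sample a" and "saturated D" and "diagram D d"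
    and "basic t"
    and "\<forall>x. time_warp (h x)"
    and "\<forall>x\<in>vars t. strongly_extends D d (Var x) (h x)"
  shows "strongly_extends D d t (eval h t)"
  by (rule main[OF assms(3,4,6) assms(5,7)])

end
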